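(* For every fixed $\alpha>0$, the functions $(x,y)\mapsto\theta_{(x,y)}(b(x,y);\alpha)$ and $(x,y)\mapsto\widehat\theta_{(x,y)}(b(x,y);\alpha)$ (defined for $x\in\mathbb{R}$, $y>0$) have vanishing gradient at $(x,y)=(1/2,\sqrt3/2)$.
   Context: For $y>0$, $c=(c_1,c_2)\in\mathbb{R}^2$, $\alpha>0$: $\theta_{(x,y)}(c;\alpha)=\sum_{k,l\in\mathbb{Z}}\exp(-\tfrac{\pi\alpha}{y}((k+c_1)^2+2x(k+c_1)(l+c_2)+(x^2+y^2)(l+c_2)^2))$ and $\widehat\theta_{(x,y)}(c;\alpha)=\sum_{k,l\in\mathbb{Z}}\exp(-\tfrac{\pi\alpha}{y}(k^2+2xkl+(x^2+y^2)l^2))e^{2\pi i(kc_2-lc_1)}$. $b(x,y)=(b_1,b_2)$ with $b_1=\frac{x+(1-x)4y^2}{8y^2}$, $b_2=\frac{4y^2-1}{8y^2}$. *)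

theory Defs
  imports "HOL-Analysis.Analysis"
begin

definition theta :: "real \<Rightarrow> real \<Rightarrow> real \<times> real \<Rightarrow> real \<Rightarrow> real" where
  "theta x y c \<alpha> = (\<Sum>\<^sub>\<infinity>(k,l)\<in>(UNIV :: (int \<times> int) set).
     exp (- (pi * \<alpha> / y) * ((of_int k + fst c)\<^sup>2
        + 2 * x * (of_int k + fst c) * (of_int l + snd c)
        + (x\<^sup>2 + y\<^sup>2) * (of_int l + snd c)\<^sup>2)))"

definition theta_hat :: "real \<Rightarrow> real \<Rightarrow> real \<times> real \<Rightarrow> real \<Rightarrow> complex" where
  "theta_hat x y c \<alpha> = (\<Sum>\<^sub>\<infinity>(k,l)\<in>(UNIV :: (int \<times> int) set).
     complex_of_real (exp (- (pi * \<alpha> / y) * ((of_int k)\<^sup>2 + 2 * x * of_int k * of_int l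
        + (x\<^sup>2 + y\<^sup>2) * (of_int l)\<^sup>2)))
     * cis (2 * pi * (of_int k * snd c - of_int l * fst c)))"

definition bpt :: "real \<Rightarrow> real \<Rightarrow> real \<times> real" where
  "bpt x y = ((x + (1 - x) * 4 * y\<^sup>2) / (8 * y\<^sup>2), (4 * y\<^sup>2 - 1) / (8 * y\<^sup>2))"

end

theory Submission
  imports Defs
begin

lemma infsum_has_derivative_int2:
  fixes t :: "int \<times> int \<Rightarrow> 'a::real_normed_vector \<Rightarrow> 'b::banach"
  assumes S: "open S" "convex S" "q0 \<in> S"
  and der: "\<And>n q. q\<in>S \<Longrightarrow> (t n has_derivative t' n q) (at q)"
  and bd: "\<And>n q h. q\<in>S \<Longrightarrow> norm (t' n q h) \<le> B n * norm h"
  and bt: "\<And>n q. q\<in>S \<Longrightarrow> norm (t n q) \<le> B n"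
  and sB: "B summable_on UNIV"
  shows "\<exists>D. ((\<lambda>q. infsum (\<lambda>n. t n q) UNIV) has_derivative D) (at q0)"
proof -
  have "countable (UNIV :: (int\<times>int) set)" by simp
  moreover have "infinite (UNIV :: (int\<times>int) set)"
    by (simp add: finite_prod infinite_UNIV_int)
  ultimately obtain e :: "nat \<Rightarrow> int\<times>int" where e: "bij_betw e UNIV UNIV"
    using countable_infiniteE' by blast
  have B0: "B n \<ge> 0" for n using bt[OF S(3), of n] norm_ge_zero order_trans by blast
  have "(\<lambda>i. B (e i)) summable_on UNIV"
    using summable_on_reindex_bij_betw[OF e] sB by blast
  then have sBe: "summable (\<lambda>i. B (e i))"
    using summable_on_UNIV_nonneg_real_iff[of "\<lambda>i. B (e i)"] B0 by simp
  define g' where "g' x h = (\<Sum>i. t' (e i) x h)" for x h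
  have sd: "summable (\<lambda>i. norm (t' (e i) x h))" if "x \<in> S" for x h
    by (rule summable_comparison_test[OF _ summable_mult2[OF sBe, of "norm h"]])
       (use bd[OF that] in auto)
  have unif: "\<forall>\<^sub>F n in sequentially. \<forall>x\<in>S. \<forall>h. norm (sum (\<lambda>i. t' (e i) x h) {..<n} - g' x h) \<le> r * norm h"
    if r: "r > 0" for r
  proof -
    obtain N where N: "\<And>n. n\<ge>N \<Longrightarrow> norm (\<Sum>i. B (e (i + n))) < r"
      using suminf_exist_split[OF r sBe] by blast
    show ?thesis
    proof (rule eventually_sequentiallyI[of N], intro allI ballI)
      fix n x h assume n: "N \<le> n" and x: "x \<in> S"
      have s1: "summable (\<lambda>i. t' (e i) x h)" using sd[OF x] by (rule summable_norm_cancel)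
      have "norm (sum (\<lambda>i. t' (e i) x h) {..<n} - g' x h) = norm (\<Sum>i. t' (e (i+n)) x h)"
        unfolding g'_def suminf_minus_initial_segment[OF s1, of n]
        by (simp add: norm_minus_commute)
      also have "\<dots> \<le> (\<Sum>i. norm (t' (e (i+n)) x h))"
        by (rule summable_norm) (use sd[OF x] summable_iff_shift[of "\<lambda>i. norm (t' (e i) x h)" n] in simp)
      also have "\<dots> \<le> (\<Sum>i. B (e (i+n)) * norm h)"
        apply (rule suminf_le)
        using bd[OF x] apply simp
        using sd[OF x] summable_iff_shift[of "\<lambda>i. norm (t' (e i) x h)" n] apply simp
        using summable_mult2[OF sBe, of "norm h"] summable_iff_shift[of "\<lambda>i. B (e i) * norm h" n] by simp
      also have "\<dots> = (\<Sum>i. B (e (i+n))) * norm h"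
        by (rule suminf_mult2[symmetric]) (use sBe summable_iff_shift[of "\<lambda>i. B (e i)" n] in simp)
      also have "\<dots> \<le> r * norm h"
        using N[OF n] by (intro mult_right_mono) auto
      finally show "norm (sum (\<lambda>i. t' (e i) x h) {..<n} - g' x h) \<le> r * norm h" .
    qed
  qed
  have st: "summable (\<lambda>i. norm (t (e i) x))" if "x \<in> S" for x
    by (rule summable_comparison_test[OF _ sBe]) (use bt[OF that] in auto)
  have "\<exists>g. \<forall>x\<in>S. (\<lambda>n. t (e n) x) sums (g x) \<and> (g has_derivative g' x) (at x within S)"
  proof (rule has_derivative_series[OF S(2), of "\<lambda>n. t (e n)" "\<lambda>n x. t' (e n) x" g' q0])
    show "\<And>n x. x \<in> S \<Longrightarrow> (t (e n) has_derivative t' (e n) x) (at x within S)"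
      using der by (rule has_derivative_at_withinI)
    show "\<And>r. 0 < r \<Longrightarrow> \<forall>\<^sub>F n in sequentially. \<forall>x\<in>S. \<forall>h. norm ((\<Sum>i<n. t' (e i) x h) - g' x h) \<le> r * norm h"
      by (rule unif)
    show "q0 \<in> S" by (rule S(3))
    show "(\<lambda>n. t (e n) q0) sums (\<Sum>n. t (e n) q0)"
      by (rule summable_sums, rule summable_norm_cancel, rule st[OF S(3)])
  qed
  then obtain g where g: "\<forall>x\<in>S. (\<lambda>n. t (e n) x) sums (g x) \<and> (g has_derivative g' x) (at x within S)"
    by blast
  have geq: "g x = infsum (\<lambda>n. t n x) UNIV" if x: "x \<in> S" for x
  proof -
    have "((\<lambda>i. t (e i) x) has_sum g x) UNIV"
      using norm_summable_imp_has_sum[OF st[OF x]] g x by blast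
    then have "((\<lambda>n. t n x) has_sum g x) UNIV"
      using has_sum_reindex_bij_betw[OF e, of "\<lambda>n. t n x"] by simp
    then show ?thesis by (simp add: infsumI)
  qed
  have "(g has_derivative g' q0) (at q0)"
    using g S by (metis at_within_open)
  then have "((\<lambda>q. infsum (\<lambda>n. t n q) UNIV) has_derivative g' q0) (at q0)"
    by (rule has_derivative_transform_within_open[OF _ S(1) S(3)]) (use geq in auto)
  then show ?thesis by blast
qed


definition Qf :: "real \<Rightarrow> real \<Rightarrow> real \<Rightarrow> real \<Rightarrow> real" where
  "Qf x y u w = u\<^sup>2 + 2 * x * u * w + (x\<^sup>2 + y\<^sup>2) * w\<^sup>2"

definition Gf :: "real \<Rightarrow> real \<times> real \<times> real \<times> real \<Rightarrow> real" where
  "Gf \<alpha> p = -(pi * \<alpha>/fst(snd p)) * Qf (fst p) (fst (snd p)) (fst(snd(snd p))) (snd(snd(snd p)))"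

definition dGf :: "real \<Rightarrow> real \<times> real \<times> real \<times> real \<Rightarrow> real \<times> real \<times> real \<times> real \<Rightarrow> real" where
  "dGf \<alpha> p h = (let x = fst p; y = fst(snd p); u = fst(snd(snd p)); w = snd(snd(snd p));
     h1 = fst h; h2 = fst(snd h); h3 = fst(snd(snd h)); h4 = snd(snd(snd h)) in
     -(pi * \<alpha>) * ((2 * u * w + 2 * x * w\<^sup>2)/y * h1 + (2 * y * w\<^sup>2 / y - Qf x y u w/y\<^sup>2) * h2
        + (2 * u + 2 * x * w)/y * h3 + (2 * x * u + 2 * (x\<^sup>2 + y\<^sup>2) * w)/y * h4))"

lemma Gf_deriv:
  assumes "fst (snd p) \<noteq> 0"
  shows "(Gf \<alpha> has_derivative dGf \<alpha> p) (at p)"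
proof -
  obtain x y u w where p: "p = (x,y,u,w)" by (metis prod.collapse)
  have y: "y \<noteq> 0" using assms p by simp
  show ?thesis
    unfolding p Gf_def[abs_def] Qf_def
    apply (rule has_derivative_eq_rhs)
     apply (rule derivative_eq_intros refl | (simp add: y; fail))+
    apply (rule ext)
    subgoal for h
      apply (cases h)
      apply (simp add: dGf_def Let_def Qf_def y)
      apply (simp add: field_simps power2_eq_square y)
      done
    done
qed


lemma sqW: "(1 + a + b)\<^sup>2 = 1 + a*a + b*b + 2*a + 2*b + 2*(a*b)" for a b :: real
  by (simp add: power2_eq_square algebra_simps)

lemma bnd1: "\<bar>x\<bar> \<le> 1 \<Longrightarrow> \<bar>2 * u * w + 2 * x * w\<^sup>2\<bar> \<le> 2 * (1 + \<bar>u\<bar> + \<bar>w\<bar>)\<^sup>2" for x u w :: real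
proof -
  assume x: "\<bar>x\<bar> \<le> 1"
  have a: "\<bar>2 * u * w + 2 * x * w\<^sup>2\<bar> \<le> 2 * (\<bar>u\<bar> * \<bar>w\<bar>) + 2 * (\<bar>x\<bar> * (\<bar>w\<bar>*\<bar>w\<bar>))"
    by (rule order_trans[OF abs_triangle_ineq]) (simp add: abs_mult power2_eq_square)
  have b: "\<bar>x\<bar> * (\<bar>w\<bar>*\<bar>w\<bar>) \<le> \<bar>w\<bar>*\<bar>w\<bar>" using x by (simp add: mult_left_le_one_le)
  show ?thesis unfolding sqW
    using a b mult_nonneg_nonneg[OF abs_ge_zero[of u] abs_ge_zero[of w]] mult_nonneg_nonneg[OF abs_ge_zero[of u] abs_ge_zero[of u]] mult_nonneg_nonneg[OF abs_ge_zero[of w] abs_ge_zero[of w]] abs_ge_zero[of u] abs_ge_zero[of w]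
    by (smt (verit))
qed

lemma bnd2: "\<bar>x\<bar> \<le> 1 \<Longrightarrow> \<bar>y\<bar> \<le> 1 \<Longrightarrow> \<bar>u\<^sup>2 + 2 * x * u * w + (x\<^sup>2 + y\<^sup>2) * w\<^sup>2\<bar> \<le> 2 * (1 + \<bar>u\<bar> + \<bar>w\<bar>)\<^sup>2" for x y u w :: real
proof -
  assume x: "\<bar>x\<bar> \<le> 1" and y: "\<bar>y\<bar> \<le> 1"
  have xy: "x\<^sup>2 + y\<^sup>2 \<le> 2" using x y abs_square_le_1[of x] abs_square_le_1[of y] by linarith
  have a: "\<bar>u\<^sup>2 + 2 * x * u * w + (x\<^sup>2 + y\<^sup>2) * w\<^sup>2\<bar> \<le> \<bar>u\<bar>*\<bar>u\<bar> + 2 * (\<bar>x\<bar> * (\<bar>u\<bar> * \<bar>w\<bar>)) + (x\<^sup>2 + y\<^sup>2) * (\<bar>w\<bar>*\<bar>w\<bar>)"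
  proof -
    have "\<bar>u\<^sup>2 + 2 * x * u * w + (x\<^sup>2 + y\<^sup>2) * w\<^sup>2\<bar> \<le> \<bar>u\<^sup>2\<bar> + \<bar>2 * x * u * w\<bar> + \<bar>(x\<^sup>2 + y\<^sup>2) * w\<^sup>2\<bar>"
      by (smt (verit) abs_triangle_ineq)
    then show ?thesis by (simp add: abs_mult power2_eq_square)
  qed
  have b: "\<bar>x\<bar> * (\<bar>u\<bar> * \<bar>w\<bar>) \<le> \<bar>u\<bar> * \<bar>w\<bar>" using x by (simp add: mult_left_le_one_le)
  have c: "(x\<^sup>2 + y\<^sup>2) * (\<bar>w\<bar>*\<bar>w\<bar>) \<le> 2 * (\<bar>w\<bar>*\<bar>w\<bar>)" using xy by (intro mult_right_mono) auto
  show ?thesis unfolding sqW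
    using a b c mult_nonneg_nonneg[OF abs_ge_zero[of u] abs_ge_zero[of w]] mult_nonneg_nonneg[OF abs_ge_zero[of u] abs_ge_zero[of u]] mult_nonneg_nonneg[OF abs_ge_zero[of w] abs_ge_zero[of w]] abs_ge_zero[of u] abs_ge_zero[of w]
    by (smt (verit))
qed

lemma bnd3: "\<bar>x\<bar> \<le> 1 \<Longrightarrow> \<bar>y\<bar> \<le> 1 \<Longrightarrow> \<bar>2 * x * u + 2 * (x\<^sup>2 + y\<^sup>2) * w\<bar> \<le> 4 * (1 + \<bar>u\<bar> + \<bar>w\<bar>)\<^sup>2" for x y u w :: real
proof -
  assume x: "\<bar>x\<bar> \<le> 1" and y: "\<bar>y\<bar> \<le> 1"
  have xy: "x\<^sup>2 + y\<^sup>2 \<le> 2" using x y abs_square_le_1[of x] abs_square_le_1[of y] by linarith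
  have a: "\<bar>2 * x * u + 2 * (x\<^sup>2 + y\<^sup>2) * w\<bar> \<le> 2 * (\<bar>x\<bar> * \<bar>u\<bar>) + 2 * ((x\<^sup>2 + y\<^sup>2) * \<bar>w\<bar>)"
  proof -
    have "\<bar>2 * x * u + 2 * (x\<^sup>2 + y\<^sup>2) * w\<bar> \<le> \<bar>2 * x * u\<bar> + \<bar>2 * (x\<^sup>2 + y\<^sup>2) * w\<bar>"
      by (rule abs_triangle_ineq)
    moreover have "\<bar>2 * (x\<^sup>2 + y\<^sup>2) * w\<bar> = 2 * ((x\<^sup>2 + y\<^sup>2) * \<bar>w\<bar>)" by (simp add: abs_mult)
    moreover have "\<bar>2 * x * u\<bar> = 2 * (\<bar>x\<bar> * \<bar>u\<bar>)" by (simp add: abs_mult)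
    ultimately show ?thesis by linarith
  qed
  have b: "\<bar>x\<bar> * \<bar>u\<bar> \<le> \<bar>u\<bar>" using x by (simp add: mult_left_le_one_le)
  have c: "(x\<^sup>2 + y\<^sup>2) * \<bar>w\<bar> \<le> 2 * \<bar>w\<bar>" using xy by (intro mult_right_mono) auto
  show ?thesis unfolding sqW
    using a b c mult_nonneg_nonneg[OF abs_ge_zero[of u] abs_ge_zero[of w]] mult_nonneg_nonneg[OF abs_ge_zero[of u] abs_ge_zero[of u]] mult_nonneg_nonneg[OF abs_ge_zero[of w] abs_ge_zero[of w]] abs_ge_zero[of u] abs_ge_zero[of w]
    by (smt (verit))
qed

lemma bnd4: "\<bar>x\<bar> \<le> 1 \<Longrightarrow> \<bar>2 * u + 2 * x * w\<bar> \<le> 2 * (1 + \<bar>u\<bar> + \<bar>w\<bar>)\<^sup>2" for x u w :: real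
proof -
  assume x: "\<bar>x\<bar> \<le> 1"
  have a: "\<bar>2 * u + 2 * x * w\<bar> \<le> 2 * \<bar>u\<bar> + 2 * (\<bar>x\<bar> * \<bar>w\<bar>)"
  proof -
    have "\<bar>2 * u + 2 * x * w\<bar> \<le> \<bar>2 * u\<bar> + \<bar>2 * x * w\<bar>" by (rule abs_triangle_ineq)
    then show ?thesis by (simp add: abs_mult)
  qed
  have b: "\<bar>x\<bar> * \<bar>w\<bar> \<le> \<bar>w\<bar>" using x by (simp add: mult_left_le_one_le)
  show ?thesis unfolding sqW
    using a b mult_nonneg_nonneg[OF abs_ge_zero[of u] abs_ge_zero[of w]] mult_nonneg_nonneg[OF abs_ge_zero[of u] abs_ge_zero[of u]] mult_nonneg_nonneg[OF abs_ge_zero[of w] abs_ge_zero[of w]] abs_ge_zero[of u] abs_ge_zero[of w]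
    by (smt (verit))
qed

lemma comp_le_norm:
  fixes h :: "real \<times> real \<times> real \<times> real"
  shows "\<bar>fst h\<bar> \<le> norm h" "\<bar>fst (snd h)\<bar> \<le> norm h" "\<bar>fst (snd (snd h))\<bar> \<le> norm h" "\<bar>snd (snd (snd h))\<bar> \<le> norm h"
proof -
  obtain a b c d where h: "h = (a,b,c,d)" by (metis prod.collapse)
  have 1: "norm (c,d) \<le> norm (b,c,d)" "norm (b,c,d) \<le> norm (a,b,c,d)" by (rule norm_snd_le)+
  have 2: "norm c \<le> norm (c,d)" "norm d \<le> norm (c,d)" "norm b \<le> norm (b,c,d)" "norm a \<le> norm (a,b,c,d)"
    by (rule norm_fst_le norm_snd_le)+
  show "\<bar>fst h\<bar> \<le> norm h" unfolding h using 2(4) by simp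
  show "\<bar>fst (snd h)\<bar> \<le> norm h" unfolding h using order_trans[OF 2(3) 1(2)] by simp
  show "\<bar>fst (snd (snd h))\<bar> \<le> norm h" unfolding h using order_trans[OF order_trans[OF 2(1) 1(1)] 1(2)] by simp
  show "\<bar>snd (snd (snd h))\<bar> \<le> norm h" unfolding h using order_trans[OF order_trans[OF 2(2) 1(1)] 1(2)] by simp
qed

lemma div_y_bnd: "1/2 \<le> y \<Longrightarrow> \<bar>N / y\<bar> \<le> 2 * \<bar>N\<bar>" for y N :: real
proof -
  assume y: "1/2 \<le> y"
  have "\<bar>N / y\<bar> = \<bar>N\<bar> / y" using y by (simp add: abs_div)
  also have "\<dots> \<le> \<bar>N\<bar> / (1/2)" by (rule divide_left_mono) (use y in auto)
  finally show ?thesis by simp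
qed

lemma div_y2_bnd: "1/2 \<le> y \<Longrightarrow> \<bar>N / y\<^sup>2\<bar> \<le> 4 * \<bar>N\<bar>" for y N :: real
proof -
  assume y: "1/2 \<le> y"
  have y4: "1/4 \<le> y\<^sup>2" using y power_mono[of "1/2" y 2] by (simp add: power2_eq_square)
  have "\<bar>N / y\<^sup>2\<bar> = \<bar>N\<bar> / y\<^sup>2" by (simp add: abs_div)
  also have "\<dots> \<le> \<bar>N\<bar> / (1/4)" by (rule divide_left_mono) (use y4 in auto)
  finally show ?thesis by simp
qed

lemma lin1: "a \<le> 2 * b \<Longrightarrow> b \<le> 2 * c \<Longrightarrow> a \<le> 4 * (c::real)" by linarith
lemma lin2: "a \<le> 2 * b \<Longrightarrow> b \<le> 4 * c \<Longrightarrow> a \<le> 8 * (c::real)" by linarith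
lemma lin3: "t \<le> A + B \<Longrightarrow> A = 2 * s \<Longrightarrow> s \<le> W \<Longrightarrow> B \<le> 4 * q \<Longrightarrow> q \<le> 2 * W \<Longrightarrow> t \<le> 10 * (W::real)" by linarith

lemma abs4: "\<bar>A + B + C + D\<bar> \<le> \<bar>A\<bar> + \<bar>B\<bar> + \<bar>C\<bar> + \<bar>D::real\<bar>"
proof -
  have "\<bar>A + B + C + D\<bar> \<le> \<bar>A + B + C\<bar> + \<bar>D\<bar>" by (rule abs_triangle_ineq)
  also have "\<bar>A + B + C\<bar> \<le> \<bar>A + B\<bar> + \<bar>C\<bar>" by (rule abs_triangle_ineq)
  also have "\<bar>A + B\<bar> \<le> \<bar>A\<bar> + \<bar>B\<bar>" by (rule abs_triangle_ineq)
  finally show ?thesis by simp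
qed

lemma dGf_bound:
  assumes a: "\<alpha> > 0" and x: "\<bar>fst p\<bar> \<le> 1" and y1: "1/2 \<le> fst (snd p)" and y2: "fst (snd p) \<le> 1"
  shows "\<bar>dGf \<alpha> p h\<bar> \<le> 26 * pi * \<alpha> * (1 + \<bar>fst (snd (snd p))\<bar> + \<bar>snd (snd (snd p))\<bar>)\<^sup>2 * norm h"
proof -
  obtain x y u w where p: "p = (x,y,u,w)" by (metis prod.collapse)
  obtain h1 h2 h3 h4 where h: "h = (h1,h2,h3,h4)" by (metis prod.collapse)
  have x: "\<bar>x\<bar> \<le> 1" and y1: "1/2 \<le> y" and y2: "y \<le> 1" using x y1 y2 p by auto
  have ya: "\<bar>y\<bar> \<le> 1" using y1 y2 by auto
  define W where "W = (1 + \<bar>u\<bar> + \<bar>w\<bar>)\<^sup>2"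
  have n: "\<bar>h1\<bar> \<le> norm h" "\<bar>h2\<bar> \<le> norm h" "\<bar>h3\<bar> \<le> norm h" "\<bar>h4\<bar> \<le> norm h"
    using comp_le_norm[of h] unfolding h by auto
  define C1 where "C1 = (2 * u * w + 2 * x * w\<^sup>2) / y"
  define C2 where "C2 = 2 * y * w\<^sup>2 / y - Qf x y u w / y\<^sup>2"
  define C3 where "C3 = (2 * u + 2 * x * w) / y"
  define C4 where "C4 = (2 * x * u + 2 * (x\<^sup>2 + y\<^sup>2) * w) / y"
  have c1: "\<bar>C1\<bar> \<le> 4 * W" unfolding C1_def W_def
    by (rule lin1[OF div_y_bnd[OF y1] bnd1[OF x]])
  have w2: "2 * y * w\<^sup>2 / y = 2 * w\<^sup>2" using y1 by simp
  have ww: "w\<^sup>2 \<le> W"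
  proof -
    have "\<bar>w\<bar>\<^sup>2 \<le> (1 + \<bar>u\<bar> + \<bar>w\<bar>)\<^sup>2" by (rule power_mono) auto
    then show ?thesis unfolding W_def by simp
  qed
  have c2: "\<bar>C2\<bar> \<le> 10 * W" unfolding C2_def w2
  proof -
    have t1: "\<bar>2 * w\<^sup>2 - Qf x y u w / y\<^sup>2\<bar> \<le> \<bar>2 * w\<^sup>2\<bar> + \<bar>Qf x y u w / y\<^sup>2\<bar>" by (rule abs_triangle_ineq4)
    have t2: "\<bar>2 * w\<^sup>2\<bar> = 2 * w\<^sup>2" by simp
    have t3: "\<bar>Qf x y u w\<bar> \<le> 2 * W" unfolding W_def Qf_def by (rule bnd2[OF x ya])
    show "\<bar>2 * w\<^sup>2 - Qf x y u w / y\<^sup>2\<bar> \<le> 10 * W"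
      by (rule lin3[OF t1 t2 ww div_y2_bnd[OF y1] t3])
  qed
  have c3: "\<bar>C3\<bar> \<le> 4 * W" unfolding C3_def W_def
    by (rule lin1[OF div_y_bnd[OF y1] bnd4[OF x]])
  have c4: "\<bar>C4\<bar> \<le> 8 * W" unfolding C4_def W_def
    by (rule lin2[OF div_y_bnd[OF y1] bnd3[OF x ya]])
  have eq: "dGf \<alpha> p h = -(pi*\<alpha>) * (C1 * h1 + C2 * h2 + C3 * h3 + C4 * h4)"
    unfolding dGf_def p h C1_def C2_def C3_def C4_def Let_def by simp
  have "\<bar>C1 * h1 + C2 * h2 + C3 * h3 + C4 * h4\<bar> \<le> \<bar>C1\<bar> * \<bar>h1\<bar> + \<bar>C2\<bar> * \<bar>h2\<bar> + \<bar>C3\<bar> * \<bar>h3\<bar> + \<bar>C4\<bar> * \<bar>h4\<bar>"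
    unfolding abs_mult[symmetric] by (rule abs4)
  also have "\<dots> \<le> 4 * W * norm h + 10 * W * norm h + 4 * W * norm h + 8 * W * norm h"
  proof -
    have W0: "0 \<le> W" unfolding W_def by simp
    have "\<bar>C1\<bar> * \<bar>h1\<bar> \<le> 4 * W * norm h" using mult_mono[OF c1 n(1)] W0 by simp
    moreover have "\<bar>C2\<bar> * \<bar>h2\<bar> \<le> 10 * W * norm h" using mult_mono[OF c2 n(2)] W0 by simp
    moreover have "\<bar>C3\<bar> * \<bar>h3\<bar> \<le> 4 * W * norm h" using mult_mono[OF c3 n(3)] W0 by simp
    moreover have "\<bar>C4\<bar> * \<bar>h4\<bar> \<le> 8 * W * norm h" using mult_mono[OF c4 n(4)] W0 by simp
    ultimately show ?thesis by linarith
  qed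
  also have "\<dots> = 26 * W * norm h" by simp
  finally have *: "\<bar>C1 * h1 + C2 * h2 + C3 * h3 + C4 * h4\<bar> \<le> 26 * W * norm h" .
  have "\<bar>dGf \<alpha> p h\<bar> = pi * \<alpha> * \<bar>C1 * h1 + C2 * h2 + C3 * h3 + C4 * h4\<bar>"
    unfolding eq using a by (simp add: abs_mult)
  also have "\<dots> \<le> pi * \<alpha> * (26 * W * norm h)"
    using * a by (intro mult_left_mono) auto
  also have "pi * \<alpha> * (26 * W * norm h) = 26 * pi * \<alpha> * (1 + \<bar>u\<bar> + \<bar>w\<bar>)\<^sup>2 * norm h"
    unfolding W_def by (simp only: mult_ac)
  finally show ?thesis unfolding p by simp
qed

lemma Qf_lower:
  assumes x: "\<bar>x\<bar> \<le> 1" and y1: "1/2 \<le> y" and y2: "y \<le> 1"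
  shows "(u\<^sup>2 + w\<^sup>2) / 16 \<le> Qf x y u w / y"
proof -
  have Q: "Qf x y u w = (u + x*w)\<^sup>2 + y\<^sup>2 * w\<^sup>2" unfolding Qf_def by (simp add: power2_eq_square algebra_simps)
  have Q0: "0 \<le> Qf x y u w" unfolding Q by simp
  have Qy: "Qf x y u w \<le> Qf x y u w / y" using Q0 y1 y2 by (simp add: le_divide_eq mult_left_le)
  have y4: "y\<^sup>2 \<ge> 1/4" using y1 power_mono[of "1/2" y 2] by (simp add: power2_eq_square)
  have u2: "u\<^sup>2 \<le> 2 * (u + x*w)\<^sup>2 + 2 * (x*w)\<^sup>2"
  proof -
    have "2 * (u + x*w)\<^sup>2 + 2 * (x*w)\<^sup>2 - u\<^sup>2 = (u + 2*x*w)\<^sup>2"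
      by (simp add: power2_eq_square algebra_simps)
    then show ?thesis using zero_le_power2[of "u + 2*x*w"] by linarith
  qed
  have xw: "(x*w)\<^sup>2 \<le> w\<^sup>2" using x by (simp add: power_mult_distrib abs_square_le_1 mult_left_le_one_le)
  have yw: "y\<^sup>2 * w\<^sup>2 \<ge> w\<^sup>2 / 4" using y4 mult_right_mono[OF y4 zero_le_power2[of w]] by simp
  have "(u\<^sup>2 + w\<^sup>2) / 16 \<le> Qf x y u w"
    unfolding Q add_divide_distrib using u2 xw yw zero_le_power2[of "u + x*w"] zero_le_power2[of w] by linarith
  then show ?thesis using Qy by linarith
qed

lemma Gf_upper:
  assumes a: "\<alpha> > 0" and x: "\<bar>fst p\<bar> \<le> 1" and y1: "1/2 \<le> fst (snd p)" and y2: "fst (snd p) \<le> 1"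
  shows "Gf \<alpha> p \<le> -(pi*\<alpha>/16) * ((fst (snd (snd p)))\<^sup>2 + (snd (snd (snd p)))\<^sup>2)"
proof -
  obtain x y u w where p: "p = (x,y,u,w)" by (metis prod.collapse)
  have x': "\<bar>x\<bar> \<le> 1" and y1': "1/2 \<le> y" and y2': "y \<le> 1" using x y1 y2 unfolding p by simp_all
  have "(u\<^sup>2 + w\<^sup>2) / 16 \<le> Qf x y u w / y" by (rule Qf_lower[OF x' y1' y2'])
  then have "pi * \<alpha> * ((u\<^sup>2 + w\<^sup>2) / 16) \<le> pi * \<alpha> * (Qf x y u w / y)" using a by (intro mult_left_mono) auto
  moreover have "Gf \<alpha> p = -(pi * \<alpha> * (Qf x y u w / y))" by (simp add: Gf_def p)
  moreover have "-(pi*\<alpha>/16) * ((fst (snd (snd p)))\<^sup>2 + (snd (snd (snd p)))\<^sup>2) = -(pi * \<alpha> * ((u\<^sup>2 + w\<^sup>2) / 16))"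
    by (simp add: p)
  ultimately show ?thesis by linarith
qed


definition sh :: "int \<times> int \<Rightarrow> real \<times> real \<times> real \<times> real \<Rightarrow> real \<times> real \<times> real \<times> real" where
  "sh n q = (fst q, fst (snd q), of_int (fst n) + fst (snd (snd q)), of_int (snd n) + snd (snd (snd q)))"

definition sh0 :: "int \<times> int \<Rightarrow> real \<times> real \<times> real \<times> real \<Rightarrow> real \<times> real \<times> real \<times> real" where
  "sh0 n q = (fst q, fst (snd q), of_int (fst n), of_int (snd n))"

definition P0 :: "real \<times> real \<times> real \<times> real \<Rightarrow> real \<times> real \<times> real \<times> real" where
  "P0 h = (fst h, fst (snd h), 0, 0)"

definition phs :: "int \<times> int \<Rightarrow> real \<times> real \<times> real \<times> real \<Rightarrow> real" where
  "phs n q = 2 * pi * (of_int (fst n) * snd (snd (snd q)) - of_int (snd n) * fst (snd (snd q)))"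

definition T1 :: "real \<Rightarrow> int \<times> int \<Rightarrow> real \<times> real \<times> real \<times> real \<Rightarrow> real" where
  "T1 \<alpha> n q = exp (Gf \<alpha> (sh n q))"

definition T1' :: "real \<Rightarrow> int \<times> int \<Rightarrow> real \<times> real \<times> real \<times> real \<Rightarrow> real \<times> real \<times> real \<times> real \<Rightarrow> real" where
  "T1' \<alpha> n q h = dGf \<alpha> (sh n q) h * exp (Gf \<alpha> (sh n q))"

definition T2 :: "real \<Rightarrow> int \<times> int \<Rightarrow> real \<times> real \<times> real \<times> real \<Rightarrow> complex" where
  "T2 \<alpha> n q = complex_of_real (exp (Gf \<alpha> (sh0 n q))) * cis (phs n q)"

definition T2' :: "real \<Rightarrow> int \<times> int \<Rightarrow> real \<times> real \<times> real \<times> real \<Rightarrow> real \<times> real \<times> real \<times> real \<Rightarrow> complex" where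
  "T2' \<alpha> n q h = complex_of_real (dGf \<alpha> (sh0 n q) (P0 h) * exp (Gf \<alpha> (sh0 n q))) * cis (phs n q)
     + complex_of_real (exp (Gf \<alpha> (sh0 n q))) * (2 * pi * (of_int (fst n) * snd (snd (snd h)) - of_int (snd n) * fst (snd (snd h)))) *\<^sub>R (\<i> * cis (phs n q))"

lemma sh_deriv: "(sh n has_derivative (\<lambda>h. h)) (at q)"
  unfolding sh_def[abs_def]
  apply (rule has_derivative_eq_rhs)
   apply (rule derivative_eq_intros refl)+
  apply (rule ext)
  apply simp
  done

lemma sh0_deriv: "(sh0 n has_derivative P0) (at q)"
  unfolding sh0_def[abs_def]
  apply (rule has_derivative_eq_rhs)
   apply (rule derivative_eq_intros refl)+
  apply (rule ext)
  apply (simp add: P0_def zero_prod_def)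
  done

lemma phs_deriv: "(phs n has_derivative (\<lambda>h. 2 * pi * (of_int (fst n) * snd (snd (snd h)) - of_int (snd n) * fst (snd (snd h))))) (at q)"
  unfolding phs_def[abs_def]
  apply (rule has_derivative_eq_rhs)
   apply (rule derivative_eq_intros refl)+
  done

lemma T1_deriv:
  assumes "fst (snd q) \<noteq> 0"
  shows "(T1 \<alpha> n has_derivative T1' \<alpha> n q) (at q)"
proof -
  have "fst (snd (sh n q)) \<noteq> 0" using assms by (simp add: sh_def)
  then have "((\<lambda>q. Gf \<alpha> (sh n q)) has_derivative (\<lambda>h. dGf \<alpha> (sh n q) h)) (at q)"
    using has_derivative_compose[OF sh_deriv Gf_deriv] by blast
  from has_derivative_exp[OF this] show ?thesis
    unfolding T1_def[abs_def] T1'_def by simp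
qed

lemma T2_deriv:
  assumes "fst (snd q) \<noteq> 0"
  shows "(T2 \<alpha> n has_derivative T2' \<alpha> n q) (at q)"
proof -
  have "fst (snd (sh0 n q)) \<noteq> 0" using assms by (simp add: sh0_def)
  then have g: "((\<lambda>q. Gf \<alpha> (sh0 n q)) has_derivative (\<lambda>h. dGf \<alpha> (sh0 n q) (P0 h))) (at q)"
    using has_derivative_compose[OF sh0_deriv Gf_deriv] by blast
  have e: "((\<lambda>q. complex_of_real (exp (Gf \<alpha> (sh0 n q)))) has_derivative
      (\<lambda>h. complex_of_real (dGf \<alpha> (sh0 n q) (P0 h) * exp (Gf \<alpha> (sh0 n q))))) (at q)"
    using has_derivative_of_real[OF has_derivative_exp[OF g]] .
  have c: "((\<lambda>q. cis (phs n q)) has_derivative (\<lambda>h. (2 * pi * (of_int (fst n) * snd (snd (snd h)) - of_int (snd n) * fst (snd (snd h)))) *\<^sub>R (\<i> * cis (phs n q)))) (at q)"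
    by (rule has_derivative_cis[OF phs_deriv])
  show ?thesis
    unfolding T2_def[abs_def] T2'_def
    using has_derivative_mult[OF e c] by (simp add: algebra_simps)
qed


lemma decay0:
  fixes a :: real assumes a: "a > 0"
  shows "(1 + \<bar>s\<bar>)\<^sup>2 * exp (-a * s\<^sup>2) \<le> (2 * (9/4 + 1/a) * exp (a/4)) * exp (-a * \<bar>s\<bar>)"
proof -
  define t where "t = \<bar>s\<bar>"
  define z where "z = (t - 1/2)\<^sup>2"
  define K where "K = 9/4 + 1/a"
  have z0: "0 \<le> z" unfolding z_def by simp
  have s2: "s\<^sup>2 = t\<^sup>2" unfolding t_def by simp
  have ex: "exp (-a * s\<^sup>2) = exp (-a * z) * exp (a/4) * exp (-a * t)"
  proof -
    have "-a * s\<^sup>2 = -a * z + a/4 + -a * t" unfolding s2 z_def by (simp add: power2_eq_square algebra_simps)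
    then show ?thesis by (simp add: exp_add[symmetric])
  qed
  have p1: "(1 + t)\<^sup>2 \<le> 2 * (9/4 + z)"
  proof -
    have "2 * (9/4 + z) - (1 + t)\<^sup>2 = (t - 2)\<^sup>2" unfolding z_def by (simp add: power2_eq_square field_simps)
    then show ?thesis using zero_le_power2[of "t - 2"] by linarith
  qed
  have p2: "9/4 + z \<le> K * (1 + a * z)"
  proof -
    have "K * (1 + a * z) = 9/4 + 1/a + (9/4) * a * z + z" unfolding K_def using a by (simp add: field_simps)
    moreover have "0 \<le> (9/4) * a * z" using a z0 by simp
    moreover have "0 \<le> 1/a" using a by simp
    ultimately show ?thesis by linarith
  qed
  have p3: "(1 + a * z) * exp (-a * z) \<le> 1"
  proof -
    have "1 + a * z \<le> exp (a * z)" by (rule exp_ge_add_one_self)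
    then have "(1 + a * z) * exp (-a * z) \<le> exp (a * z) * exp (-a * z)" by (intro mult_right_mono) auto
    also have "\<dots> = 1" by (simp add: exp_add[symmetric])
    finally show ?thesis .
  qed
  have K0: "0 \<le> K" unfolding K_def using a by simp
  have "(1 + \<bar>s\<bar>)\<^sup>2 * exp (-a * s\<^sup>2) = (1 + t)\<^sup>2 * exp (-a * z) * (exp (a/4) * exp (-a * t))"
    unfolding ex t_def by simp
  also have "\<dots> \<le> (2 * (K * (1 + a * z))) * exp (-a * z) * (exp (a/4) * exp (-a * t))"
    using p1 p2 by (intro mult_right_mono) auto
  also have "\<dots> = 2 * K * ((1 + a * z) * exp (-a * z)) * (exp (a/4) * exp (-a * t))" by simp
  also have "\<dots> \<le> 2 * K * 1 * (exp (a/4) * exp (-a * t))"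
    using p3 K0 by (intro mult_right_mono mult_left_mono) auto
  finally show ?thesis unfolding K_def t_def by simp
qed

lemma decay1:
  fixes a :: real assumes a: "a > 0"
  shows "\<exists>M>0. \<forall>k c. \<bar>c\<bar> \<le> 1 \<longrightarrow> (1 + \<bar>k + c\<bar>)\<^sup>2 * exp (-a * (k + c)\<^sup>2) \<le> M * exp (-a * \<bar>k\<bar>)"
proof (intro exI conjI allI impI)
  define M0 where "M0 = 2 * (9/4 + 1/a) * exp (a/4)"
  have "0 < 9/4 + 1/a" using a by (simp add: add_pos_nonneg)
  then show "0 < M0 * exp a" unfolding M0_def by simp
  fix k c :: real assume c: "\<bar>c\<bar> \<le> 1"
  have "(1 + \<bar>k + c\<bar>)\<^sup>2 * exp (-a * (k + c)\<^sup>2) \<le> M0 * exp (-a * \<bar>k + c\<bar>)"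
    unfolding M0_def by (rule decay0[OF a])
  also have "exp (-a * \<bar>k + c\<bar>) \<le> exp a * exp (-a * \<bar>k\<bar>)"
  proof -
    have kc: "\<bar>k\<bar> - 1 \<le> \<bar>k + c\<bar>" using c by linarith
    have "a * (\<bar>k\<bar> - 1) \<le> a * \<bar>k + c\<bar>" using mult_left_mono[OF kc, of a] a by simp
    then have "-a * \<bar>k + c\<bar> \<le> a + -a * \<bar>k\<bar>" by (simp add: algebra_simps)
    then show ?thesis by (simp add: exp_add[symmetric])
  qed
  then have "M0 * exp (-a * \<bar>k + c\<bar>) \<le> M0 * (exp a * exp (-a * \<bar>k\<bar>))"
    unfolding M0_def using a by (intro mult_left_mono) auto
  finally show "(1 + \<bar>k + c\<bar>)\<^sup>2 * exp (-a * (k + c)\<^sup>2) \<le> M0 * exp a * exp (-a * \<bar>k\<bar>)"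
    by (simp add: mult.assoc)
qed

lemma summable_exp_abs_int:
  fixes a :: real assumes a: "a > 0"
  shows "(\<lambda>k::int. exp (-a * \<bar>of_int k\<bar>)) summable_on UNIV"
proof -
  have g: "summable (\<lambda>n::nat. exp (-a) ^ n)" by (rule summable_geometric) (use a in simp)
  have e: "exp (-a * real n) = exp (-a) ^ n" for n :: nat by (simp add: exp_of_nat_mult[symmetric] mult.commute)
  have sn: "(\<lambda>n::nat. exp (-a * real n)) summable_on UNIV"
    using g unfolding e by (subst summable_on_UNIV_nonneg_real_iff) auto
  have s1: "(\<lambda>k::int. exp (-a * \<bar>of_int k\<bar>)) summable_on (range int)"
    by (subst summable_on_reindex) (use sn in \<open>auto simp: o_def\<close>)
  have s2: "(\<lambda>k::int. exp (-a * \<bar>of_int k\<bar>)) summable_on (range (\<lambda>n. - int n))"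
    by (subst summable_on_reindex) (use sn in \<open>auto simp: o_def inj_on_def\<close>)
  have U: "(UNIV :: int set) = range int \<union> range (\<lambda>n. - int n)"
    by (auto intro: int_cases2)
  show ?thesis unfolding U by (rule summable_on_union[OF s1 s2])
qed

lemma summable_exp_abs_int2:
  fixes a :: real assumes a: "a > 0"
  shows "(\<lambda>n::int\<times>int. exp (-a * \<bar>of_int (fst n)\<bar>) * exp (-a * \<bar>of_int (snd n)\<bar>)) summable_on UNIV"
proof -
  let ?f = "\<lambda>k::int. exp (-a * \<bar>of_int k\<bar>)"
  have s: "?f summable_on UNIV" by (rule summable_exp_abs_int[OF a])
  have "(\<lambda>n. ?f (fst n) * ?f (snd n)) summable_on (Sigma UNIV (\<lambda>_. UNIV))"
  proof (rule summable_on_SigmaI[where g = "\<lambda>k. ?f k * infsum ?f UNIV"])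
    show "((\<lambda>l. ?f (fst (k, l)) * ?f (snd (k, l))) has_sum ?f k * infsum ?f UNIV) UNIV" for k
      using has_sum_cmult_right[OF has_sum_infsum[OF s], of "?f k"] by simp
    show "(\<lambda>k. ?f k * infsum ?f UNIV) summable_on UNIV"
      using summable_on_cmult_left[OF s] by simp
    show "0 \<le> ?f (fst (k, l)) * ?f (snd (k, l))" for k l by simp
  qed
  then show ?thesis by simp
qed


lemma norm_pair_mono:
  fixes a :: "'a::real_normed_vector" and b b' :: "'b::real_normed_vector"
  assumes "norm b \<le> norm b'"
  shows "norm (a, b) \<le> norm (a, b')"
proof -
  have "(norm b)\<^sup>2 \<le> (norm b')\<^sup>2" using assms by (intro power_mono) auto
  then show ?thesis unfolding norm_Pair by (intro real_sqrt_le_mono) simp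
qed

lemma norm_P0: "norm (P0 h) \<le> norm h"
proof -
  obtain a b c d where h: "h = (a,b,c,d)" by (metis prod.collapse)
  have "norm ((0::real), (0::real)) \<le> norm (c,d)" by simp
  then have "norm (b, (0::real), (0::real)) \<le> norm (b,c,d)" by (rule norm_pair_mono)
  then have "norm (a, b, (0::real), (0::real)) \<le> norm (a,b,c,d)" by (rule norm_pair_mono)
  then show ?thesis unfolding h P0_def by simp
qed

lemma W_split: "(1 + \<bar>u\<bar> + \<bar>w\<bar>)\<^sup>2 \<le> (1 + \<bar>u\<bar>)\<^sup>2 * (1 + \<bar>w\<bar>)\<^sup>2" for u w :: real
proof -
  have "1 + \<bar>u\<bar> + \<bar>w\<bar> \<le> (1 + \<bar>u\<bar>) * (1 + \<bar>w\<bar>)"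
    by (simp add: algebra_simps)
  then have "(1 + \<bar>u\<bar> + \<bar>w\<bar>)\<^sup>2 \<le> ((1 + \<bar>u\<bar>) * (1 + \<bar>w\<bar>))\<^sup>2" by (intro power_mono) auto
  then show ?thesis by (simp add: power_mult_distrib)
qed

definition good :: "real \<times> real \<times> real \<times> real \<Rightarrow> bool" where
  "good q \<longleftrightarrow> \<bar>fst q\<bar> \<le> 1 \<and> 1/2 \<le> fst (snd q) \<and> fst (snd q) \<le> 1 \<and> \<bar>fst (snd (snd q))\<bar> \<le> 1 \<and> \<bar>snd (snd (snd q))\<bar> \<le> 1"

lemma core:
  fixes \<alpha> M k l x y c1 c2 :: real
  assumes a: "\<alpha> > 0" and x: "\<bar>x\<bar> \<le> 1" and y1: "1/2 \<le> y" and y2: "y \<le> 1"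
    and c1: "\<bar>c1\<bar> \<le> 1" and c2: "\<bar>c2\<bar> \<le> 1"
    and M: "\<forall>k c. \<bar>c\<bar> \<le> 1 \<longrightarrow> (1 + \<bar>k + c\<bar>)\<^sup>2 * exp (-(pi*\<alpha>/16) * (k + c)\<^sup>2) \<le> M * exp (-(pi*\<alpha>/16) * \<bar>k\<bar>)"
  shows "(1 + \<bar>k + c1\<bar> + \<bar>l + c2\<bar>)\<^sup>2 * exp (Gf \<alpha> (x, y, k + c1, l + c2))
           \<le> M\<^sup>2 * (exp (-(pi*\<alpha>/16) * \<bar>k\<bar>) * exp (-(pi*\<alpha>/16) * \<bar>l\<bar>))"
    and "exp (Gf \<alpha> (x, y, k + c1, l + c2)) \<le> M\<^sup>2 * (exp (-(pi*\<alpha>/16) * \<bar>k\<bar>) * exp (-(pi*\<alpha>/16) * \<bar>l\<bar>))"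
proof -
  define a where "a = pi*\<alpha>/16"
  define u where "u = k + c1"
  define w where "w = l + c2"
  have Mu: "(1 + \<bar>u\<bar>)\<^sup>2 * exp (-a * u\<^sup>2) \<le> M * exp (-a * \<bar>k\<bar>)" using M c1 unfolding u_def a_def by blast
  have Mw: "(1 + \<bar>w\<bar>)\<^sup>2 * exp (-a * w\<^sup>2) \<le> M * exp (-a * \<bar>l\<bar>)" using M c2 unfolding w_def a_def by blast
  have G: "Gf \<alpha> (x, y, u, w) \<le> -a * u\<^sup>2 + -a * w\<^sup>2"
    using Gf_upper[OF a, of "(x,y,u,w)"] x y1 y2 unfolding a_def by (simp add: algebra_simps)
  have E: "exp (Gf \<alpha> (x, y, u, w)) \<le> exp (-a * u\<^sup>2) * exp (-a * w\<^sup>2)"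
    using G by (simp add: exp_add[symmetric])
  have P: "(1 + \<bar>u\<bar>)\<^sup>2 * exp (-a * u\<^sup>2) * ((1 + \<bar>w\<bar>)\<^sup>2 * exp (-a * w\<^sup>2)) \<le> M * exp (-a * \<bar>k\<bar>) * (M * exp (-a * \<bar>l\<bar>))"
    by (rule mult_mono[OF Mu Mw]) (use Mu in \<open>auto intro: order_trans[rotated]\<close>)
  have "(1 + \<bar>u\<bar> + \<bar>w\<bar>)\<^sup>2 * exp (Gf \<alpha> (x, y, u, w)) \<le> ((1 + \<bar>u\<bar>)\<^sup>2 * (1 + \<bar>w\<bar>)\<^sup>2) * (exp (-a * u\<^sup>2) * exp (-a * w\<^sup>2))"
    by (rule mult_mono[OF W_split E]) auto
  also have "\<dots> = (1 + \<bar>u\<bar>)\<^sup>2 * exp (-a * u\<^sup>2) * ((1 + \<bar>w\<bar>)\<^sup>2 * exp (-a * w\<^sup>2))" by (simp only: mult_ac)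
  also have "\<dots> \<le> M * exp (-a * \<bar>k\<bar>) * (M * exp (-a * \<bar>l\<bar>))" by (rule P)
  also have "\<dots> = M\<^sup>2 * (exp (-a * \<bar>k\<bar>) * exp (-a * \<bar>l\<bar>))" by (simp add: power2_eq_square)
  finally have 1: "(1 + \<bar>u\<bar> + \<bar>w\<bar>)\<^sup>2 * exp (Gf \<alpha> (x, y, u, w)) \<le> M\<^sup>2 * (exp (-a * \<bar>k\<bar>) * exp (-a * \<bar>l\<bar>))" .
  then show "(1 + \<bar>k + c1\<bar> + \<bar>l + c2\<bar>)\<^sup>2 * exp (Gf \<alpha> (x, y, k + c1, l + c2))
           \<le> M\<^sup>2 * (exp (-(pi*\<alpha>/16) * \<bar>k\<bar>) * exp (-(pi*\<alpha>/16) * \<bar>l\<bar>))"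
    unfolding u_def w_def a_def by simp
  have "1 \<le> (1 + \<bar>u\<bar> + \<bar>w\<bar>)\<^sup>2" by (rule one_le_power) simp
  then have "exp (Gf \<alpha> (x, y, u, w)) \<le> (1 + \<bar>u\<bar> + \<bar>w\<bar>)\<^sup>2 * exp (Gf \<alpha> (x, y, u, w))"
    by (simp add: mult_le_cancel_right1)
  from order_trans[OF this 1] show "exp (Gf \<alpha> (x, y, k + c1, l + c2)) \<le> M\<^sup>2 * (exp (-(pi*\<alpha>/16) * \<bar>k\<bar>) * exp (-(pi*\<alpha>/16) * \<bar>l\<bar>))"
    unfolding u_def w_def a_def by simp
qed


definition Bk :: "real \<Rightarrow> real \<Rightarrow> int \<times> int \<Rightarrow> real" where
  "Bk \<alpha> M n = (26*pi*\<alpha> + 2*pi + 1) * M\<^sup>2 * (exp (-(pi*\<alpha>/16) * \<bar>of_int (fst n)\<bar>) * exp (-(pi*\<alpha>/16) * \<bar>of_int (snd n)\<bar>))"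

lemma T1_bounds:
  assumes a: "\<alpha> > 0" and g: "good q"
    and M: "\<forall>k c. \<bar>c\<bar> \<le> 1 \<longrightarrow> (1 + \<bar>k + c\<bar>)\<^sup>2 * exp (-(pi*\<alpha>/16) * (k + c)\<^sup>2) \<le> M * exp (-(pi*\<alpha>/16) * \<bar>k\<bar>)"
  shows "norm (T1' \<alpha> n q h) \<le> Bk \<alpha> M n * norm h" "norm (T1 \<alpha> n q) \<le> Bk \<alpha> M n"
proof -
  obtain x y c1 c2 where q: "q = (x,y,c1,c2)" by (metis prod.collapse)
  obtain k l where n: "n = (k,l)" by (metis prod.collapse)
  have x: "\<bar>x\<bar> \<le> 1" and y1: "1/2 \<le> y" and y2: "y \<le> 1" and c1: "\<bar>c1\<bar> \<le> 1" and c2: "\<bar>c2\<bar> \<le> 1"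
    using g unfolding good_def q by auto
  have shq: "sh n q = (x, y, of_int k + c1, of_int l + c2)" unfolding sh_def q n by simp
  define E where "E = exp (Gf \<alpha> (x, y, of_int k + c1, of_int l + c2))"
  define W where "W = (1 + \<bar>of_int k + c1\<bar> + \<bar>of_int l + c2\<bar>)\<^sup>2"
  define R where "R = M\<^sup>2 * (exp (-(pi*\<alpha>/16) * \<bar>of_int k\<bar>) * exp (-(pi*\<alpha>/16) * \<bar>of_int l\<bar>))"
  have cw: "W * E \<le> R" and ce: "E \<le> R"
    unfolding W_def E_def R_def using core[OF a x y1 y2 c1 c2 M] by auto
  have E0: "0 \<le> E" unfolding E_def by simp
  have R0: "0 \<le> R" using ce E0 by linarith
  have Bk: "Bk \<alpha> M n = (26*pi*\<alpha> + 2*pi + 1) * R" unfolding Bk_def R_def n by simp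
  have d: "\<bar>dGf \<alpha> (sh n q) h\<bar> \<le> 26 * pi * \<alpha> * W * norm h"
    using dGf_bound[OF a, of "sh n q" h] x y1 y2 unfolding shq W_def by simp
  have "norm (T1' \<alpha> n q h) = \<bar>dGf \<alpha> (sh n q) h\<bar> * E" unfolding T1'_def E_def shq by (simp add: abs_mult)
  also have "\<dots> \<le> (26 * pi * \<alpha> * W * norm h) * E" using d E_def by (intro mult_right_mono) auto
  also have "\<dots> = (26 * pi * \<alpha>) * (W * E) * norm h" by (simp only: mult_ac)
  also have "\<dots> \<le> (26 * pi * \<alpha>) * R * norm h" using cw a by (intro mult_right_mono mult_left_mono) auto
  also have "\<dots> \<le> (26*pi*\<alpha> + 2*pi + 1) * R * norm h" using R0 by (intro mult_right_mono) auto
  finally show "norm (T1' \<alpha> n q h) \<le> Bk \<alpha> M n * norm h" unfolding Bk .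
  have "norm (T1 \<alpha> n q) = E" unfolding T1_def E_def shq by simp
  also have "\<dots> \<le> 1 * R" using ce by simp
  also have "\<dots> \<le> (26*pi*\<alpha> + 2*pi + 1) * R" using R0 a by (intro mult_right_mono) auto
  finally show "norm (T1 \<alpha> n q) \<le> Bk \<alpha> M n" unfolding Bk .
qed

lemma T2_bounds:
  assumes a: "\<alpha> > 0" and g: "good q"
    and M: "\<forall>k c. \<bar>c\<bar> \<le> 1 \<longrightarrow> (1 + \<bar>k + c\<bar>)\<^sup>2 * exp (-(pi*\<alpha>/16) * (k + c)\<^sup>2) \<le> M * exp (-(pi*\<alpha>/16) * \<bar>k\<bar>)"
  shows "norm (T2' \<alpha> n q h) \<le> Bk \<alpha> M n * norm h" "norm (T2 \<alpha> n q) \<le> Bk \<alpha> M n"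
proof -
  obtain x y c1 c2 where q: "q = (x,y,c1,c2)" by (metis prod.collapse)
  obtain k l where n: "n = (k,l)" by (metis prod.collapse)
  have x: "\<bar>x\<bar> \<le> 1" and y1: "1/2 \<le> y" and y2: "y \<le> 1"
    using g unfolding good_def q by auto
  have shq: "sh0 n q = (x, y, of_int k + 0, of_int l + 0)" unfolding sh0_def q n by simp
  define E where "E = exp (Gf \<alpha> (x, y, of_int k + 0, of_int l + 0))"
  define W where "W = (1 + \<bar>of_int k + (0::real)\<bar> + \<bar>of_int l + (0::real)\<bar>)\<^sup>2"
  define R where "R = M\<^sup>2 * (exp (-(pi*\<alpha>/16) * \<bar>of_int k\<bar>) * exp (-(pi*\<alpha>/16) * \<bar>of_int l\<bar>))"
  have cw: "W * E \<le> R" and ce: "E \<le> R"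
    unfolding W_def E_def R_def using core[OF a x y1 y2 _ _ M, of 0 0] by auto
  have E0: "0 \<le> E" unfolding E_def by simp
  have R0: "0 \<le> R" using ce E0 by linarith
  have Bk: "Bk \<alpha> M n = (26*pi*\<alpha> + 2*pi + 1) * R" unfolding Bk_def R_def n by simp
  have d: "\<bar>dGf \<alpha> (sh0 n q) (P0 h)\<bar> \<le> 26 * pi * \<alpha> * W * norm h"
  proof -
    have "\<bar>dGf \<alpha> (sh0 n q) (P0 h)\<bar> \<le> 26 * pi * \<alpha> * W * norm (P0 h)"
      using dGf_bound[OF a, of "sh0 n q" "P0 h"] x y1 y2 unfolding shq W_def by simp
    also have "\<dots> \<le> 26 * pi * \<alpha> * W * norm h" using norm_P0[of h] a unfolding W_def
      by (intro mult_left_mono) auto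
    finally show ?thesis .
  qed
  define r where "r = 2 * pi * (of_int (fst n) * snd (snd (snd h)) - of_int (snd n) * fst (snd (snd h)))"
  have r: "\<bar>r\<bar> \<le> 2 * pi * W * norm h"
  proof -
    have "\<bar>r\<bar> \<le> 2 * pi * (\<bar>of_int k\<bar> * \<bar>snd (snd (snd h))\<bar> + \<bar>of_int l\<bar> * \<bar>fst (snd (snd h))\<bar>)"
    proof -
      have t: "\<bar>of_int k * snd (snd (snd h)) - of_int l * fst (snd (snd h))\<bar> \<le> \<bar>of_int k * snd (snd (snd h))\<bar> + \<bar>of_int l * fst (snd (snd h))\<bar>"
        by (rule abs_triangle_ineq4)
      have "\<bar>r\<bar> = 2 * pi * \<bar>of_int k * snd (snd (snd h)) - of_int l * fst (snd (snd h))\<bar>"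
        unfolding r_def n by (simp add: abs_mult)
      also have "\<dots> \<le> 2 * pi * (\<bar>of_int k * snd (snd (snd h))\<bar> + \<bar>of_int l * fst (snd (snd h))\<bar>)"
        using t by (intro mult_left_mono) auto
      finally show ?thesis by (simp add: abs_mult)
    qed
    also have "\<dots> \<le> 2 * pi * (\<bar>of_int k\<bar> * norm h + \<bar>of_int l\<bar> * norm h)"
      using comp_le_norm[of h] by (intro mult_left_mono add_mono mult_left_mono) auto
    also have "\<dots> = 2 * pi * ((\<bar>of_int k\<bar> + \<bar>of_int l\<bar>) * norm h)" by (simp add: algebra_simps)
    also have "\<dots> \<le> 2 * pi * (W * norm h)"
    proof -
      have "\<bar>of_int k\<bar> + \<bar>of_int l\<bar> \<le> 1 + \<bar>of_int k\<bar> + \<bar>(of_int l::real)\<bar>" by simp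
      also have "\<dots> \<le> W" unfolding W_def using self_le_power[of "1 + \<bar>of_int k\<bar> + \<bar>(of_int l::real)\<bar>" 2] by simp
      finally show ?thesis by (intro mult_left_mono mult_right_mono) auto
    qed
    finally show ?thesis by simp
  qed
  have "norm (T2' \<alpha> n q h) \<le> norm (complex_of_real (dGf \<alpha> (sh0 n q) (P0 h) * E) * cis (phs n q))
      + norm (complex_of_real E * (r *\<^sub>R (\<i> * cis (phs n q))))"
    unfolding T2'_def E_def r_def shq by (rule norm_triangle_ineq)
  also have "\<dots> = \<bar>dGf \<alpha> (sh0 n q) (P0 h)\<bar> * E + E * \<bar>r\<bar>"
    using E0 by (simp add: norm_mult abs_mult)
  also have "\<dots> \<le> (26 * pi * \<alpha> * W * norm h) * E + E * (2 * pi * W * norm h)"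
    using d r E0 by (intro add_mono mult_right_mono mult_left_mono) auto
  also have "\<dots> = (26 * pi * \<alpha> + 2 * pi) * (W * E) * norm h" by (simp add: algebra_simps)
  also have "\<dots> \<le> (26 * pi * \<alpha> + 2 * pi) * R * norm h" using cw a by (intro mult_right_mono mult_left_mono) auto
  also have "\<dots> \<le> (26*pi*\<alpha> + 2*pi + 1) * R * norm h" using R0 by (intro mult_right_mono) auto
  finally show "norm (T2' \<alpha> n q h) \<le> Bk \<alpha> M n * norm h" unfolding Bk .
  have "norm (T2 \<alpha> n q) = E" unfolding T2_def E_def shq by (simp add: norm_mult)
  also have "\<dots> \<le> 1 * R" using ce by simp
  also have "\<dots> \<le> (26*pi*\<alpha> + 2*pi + 1) * R" using R0 a by (intro mult_right_mono) auto
  finally show "norm (T2 \<alpha> n q) \<le> Bk \<alpha> M n" unfolding Bk .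
qed


definition q0 :: "real \<times> real \<times> real \<times> real" where "q0 = (1/2, sqrt 3 / 2, 1/3, 1/3)"

lemma sqrt3_bounds: "17/10 \<le> sqrt 3" "sqrt 3 \<le> 18/10"
proof -
  have "sqrt ((17/10)\<^sup>2) \<le> sqrt 3" by (rule real_sqrt_le_mono) (simp add: power2_eq_square)
  then show "17/10 \<le> sqrt 3" by simp
  have "sqrt 3 \<le> sqrt ((18/10)\<^sup>2)" by (rule real_sqrt_le_mono) (simp add: power2_eq_square)
  then show "sqrt 3 \<le> 18/10" by simp
qed

lemma ball_good:
  assumes "q \<in> ball q0 (1/10)"
  shows "good q" "fst (snd q) \<noteq> 0"
proof -
  have d: "norm (q - q0) < 1/10" using assms by (simp add: dist_norm norm_minus_commute)
  have c: "\<bar>fst (q - q0)\<bar> < 1/10" "\<bar>fst (snd (q - q0))\<bar> < 1/10" "\<bar>fst (snd (snd (q - q0)))\<bar> < 1/10" "\<bar>snd (snd (snd (q - q0)))\<bar> < 1/10"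
    using comp_le_norm[of "q - q0"] d by linarith+
  obtain x y c1 c2 where q: "q = (x,y,c1,c2)" by (metis prod.collapse)
  have c': "\<bar>x - 1/2\<bar> < 1/10" "\<bar>y - sqrt 3 / 2\<bar> < 1/10" "\<bar>c1 - 1/3\<bar> < 1/10" "\<bar>c2 - 1/3\<bar> < 1/10"
    using c unfolding q q0_def by simp_all
  have cc: "-1/10 < x - 1/2" "x - 1/2 < 1/10" "-1/10 < y - sqrt 3 / 2" "y - sqrt 3 / 2 < 1/10"
     "-1/10 < c1 - 1/3" "c1 - 1/3 < 1/10" "-1/10 < c2 - 1/3" "c2 - 1/3 < 1/10"
    using c' unfolding abs_less_iff by auto
  have s3: "17/10 \<le> sqrt 3" "sqrt 3 \<le> 18/10" by (rule sqrt3_bounds)+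
  have "\<bar>x\<bar> \<le> 1" "1/2 \<le> y" "y \<le> 1" "\<bar>c1\<bar> \<le> 1" "\<bar>c2\<bar> \<le> 1"
    unfolding abs_le_iff using cc s3 by linarith+
  then show "good q" unfolding good_def q by simp
  show "fst (snd q) \<noteq> 0" unfolding q using cc s3 by simp
qed

lemma theta_T1: "theta (fst q) (fst (snd q)) (snd (snd q)) \<alpha> = infsum (\<lambda>n. T1 \<alpha> n q) UNIV"
  unfolding theta_def T1_def Gf_def Qf_def sh_def
  by (rule infsum_cong) (auto simp: case_prod_beta)

lemma theta_hat_T2: "theta_hat (fst q) (fst (snd q)) (snd (snd q)) \<alpha> = infsum (\<lambda>n. T2 \<alpha> n q) UNIV"
  unfolding theta_hat_def T2_def Gf_def Qf_def sh0_def phs_def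
  by (rule infsum_cong) (auto simp: case_prod_beta)

lemma F_diff:
  assumes a: "\<alpha> > 0"
  shows "\<exists>D. ((\<lambda>q. theta (fst q) (fst (snd q)) (snd (snd q)) \<alpha>) has_derivative D) (at q0)"
    and "\<exists>D. ((\<lambda>q. theta_hat (fst q) (fst (snd q)) (snd (snd q)) \<alpha>) has_derivative D) (at q0)"
proof -
  have a16: "pi * \<alpha> / 16 > 0" using a by simp
  obtain M where M: "\<forall>k c. \<bar>c\<bar> \<le> 1 \<longrightarrow> (1 + \<bar>k + c\<bar>)\<^sup>2 * exp (-(pi*\<alpha>/16) * (k + c)\<^sup>2) \<le> M * exp (-(pi*\<alpha>/16) * \<bar>k\<bar>)"
    using decay1[OF a16] by blast
  have sB: "Bk \<alpha> M summable_on UNIV"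
    unfolding Bk_def[abs_def]
    using summable_on_cmult_right[OF summable_exp_abs_int2[OF a16], of "(26*pi*\<alpha> + 2*pi + 1) * M\<^sup>2"]
    by simp
  have S: "open (ball q0 (1/10))" "convex (ball q0 (1/10))" "q0 \<in> ball q0 (1/10)" by auto
  have "\<exists>D. ((\<lambda>q. infsum (\<lambda>n. T1 \<alpha> n q) UNIV) has_derivative D) (at q0)"
    by (rule infsum_has_derivative_int2[OF S _ _ _ sB, where t' = "T1' \<alpha>"])
       (use T1_deriv T1_bounds[OF a _ M] ball_good in auto)
  then show "\<exists>D. ((\<lambda>q. theta (fst q) (fst (snd q)) (snd (snd q)) \<alpha>) has_derivative D) (at q0)"
    unfolding theta_T1 .
  have "\<exists>D. ((\<lambda>q. infsum (\<lambda>n. T2 \<alpha> n q) UNIV) has_derivative D) (at q0)"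
    by (rule infsum_has_derivative_int2[OF S _ _ _ sB, where t' = "T2' \<alpha>"])
       (use T2_deriv T2_bounds[OF a _ M] ball_good in auto)
  then show "\<exists>D. ((\<lambda>q. theta_hat (fst q) (fst (snd q)) (snd (snd q)) \<alpha>) has_derivative D) (at q0)"
    unfolding theta_hat_T2 .
qed


definition Gm :: "real \<times> real \<times> real \<times> real \<Rightarrow> real \<times> real \<times> real \<times> real" where
  "Gm q = (let x = fst q; y = fst (snd q); D = (x - 1)\<^sup>2 + (fst (snd q))\<^sup>2 in
     ((1 - x) / D, y / D, snd (snd (snd q)), 1 - fst (snd (snd q)) - snd (snd (snd q))))"

lemma Gm_simps:
  "fst (Gm q) = (1 - fst q) / ((fst q - 1)\<^sup>2 + (fst (snd q))\<^sup>2)"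
  "fst (snd (Gm q)) = fst (snd q) / ((fst q - 1)\<^sup>2 + (fst (snd q))\<^sup>2)"
  "fst (snd (snd (Gm q))) = snd (snd (snd q))"
  "snd (snd (snd (Gm q))) = 1 - fst (snd (snd q)) - snd (snd (snd q))"
  by (simp_all add: Gm_def Let_def)

lemma Gf_alt: "Gf \<alpha> (x, y, u, w) = -(pi*\<alpha>) * (Qf x y u w / y)"
  by (simp add: Gf_def)

lemma Qf_sym:
  assumes y: "y \<noteq> 0"
  shows "Qf ((1 - x) / ((x - 1)\<^sup>2 + y\<^sup>2)) (y / ((x - 1)\<^sup>2 + y\<^sup>2)) u w / (y / ((x - 1)\<^sup>2 + y\<^sup>2))
       = Qf x y (-u - w) u / y"
proof -
  define D where "D = (x - 1)\<^sup>2 + y\<^sup>2"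
  have D: "D \<noteq> 0" unfolding D_def using y by (simp add: add_nonneg_pos sum_power2_eq_zero_iff)
  have e0: "(1 - x)\<^sup>2 + y\<^sup>2 = D" unfolding D_def by (simp add: power2_eq_square algebra_simps)
  have "((1 - x) / D)\<^sup>2 + (y / D)\<^sup>2 = ((1 - x)\<^sup>2 + y\<^sup>2) / D\<^sup>2"
    by (simp add: power_divide add_divide_distrib)
  also have "\<dots> = 1 / D" unfolding e0 using D by (simp add: power2_eq_square)
  finally have e: "((1 - x) / D)\<^sup>2 + (y / D)\<^sup>2 = 1 / D" .
  have "Qf ((1 - x) / D) (y / D) u w = u\<^sup>2 + 2 * ((1 - x) / D) * u * w + w\<^sup>2 / D"
    unfolding Qf_def e by simp
  then have "Qf ((1 - x) / D) (y / D) u w / (y / D) = (D * u\<^sup>2 + 2 * (1 - x) * u * w + w\<^sup>2) / y"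
    using D y by (simp add: field_simps)
  also have "D * u\<^sup>2 + 2 * (1 - x) * u * w + w\<^sup>2 = Qf x y (-u - w) u"
    unfolding D_def Qf_def by (simp add: power2_eq_square algebra_simps)
  finally show ?thesis unfolding D_def .
qed

lemma Gf_sym:
  assumes y: "fst (snd q) \<noteq> 0"
  shows "Gf \<alpha> (fst (Gm q), fst (snd (Gm q)), u, w) = Gf \<alpha> (fst q, fst (snd q), -u - w, u)"
proof -
  obtain x yy c1 c2 where q: "q = (x,yy,c1,c2)" by (metis prod.collapse)
  have yy: "yy \<noteq> 0" using y q by simp
  show ?thesis
    unfolding Gf_alt Gm_simps q fst_conv snd_conv Qf_sym[OF yy] ..
qed

definition sig1 :: "int \<times> int \<Rightarrow> int \<times> int" where "sig1 n = (- fst n - snd n - 1, fst n)"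
definition sig2 :: "int \<times> int \<Rightarrow> int \<times> int" where "sig2 n = (- fst n - snd n, fst n)"

lemma bij_sig1: "bij sig1"
  by (rule o_bij[where g = "\<lambda>n. (snd n, - fst n - snd n - 1)"]) (auto simp: sig1_def fun_eq_iff)
lemma bij_sig2: "bij sig2"
  by (rule o_bij[where g = "\<lambda>n. (snd n, - fst n - snd n)"]) (auto simp: sig2_def fun_eq_iff)

lemma T1_sym:
  assumes y: "fst (snd q) \<noteq> 0"
  shows "T1 \<alpha> n (Gm q) = T1 \<alpha> (sig1 n) q"
proof -
  obtain x yy c1 c2 where q: "q = (x,yy,c1,c2)" by (metis prod.collapse)
  obtain k l where n: "n = (k,l)" by (metis prod.collapse)
  have "sh n (Gm q) = (fst (Gm q), fst (snd (Gm q)), of_int k + c2, of_int l + (1 - c1 - c2))"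
    unfolding sh_def n by (simp add: Gm_simps q)
  moreover have "sh (sig1 n) q = (fst q, fst (snd q), - (of_int k + c2) - (of_int l + (1 - c1 - c2)), of_int k + c2)"
    unfolding sh_def sig1_def n q by (simp add: algebra_simps)
  ultimately show ?thesis unfolding T1_def using Gf_sym[OF y] by simp
qed

lemma T2_sym:
  assumes y: "fst (snd q) \<noteq> 0"
  shows "T2 \<alpha> n (Gm q) = T2 \<alpha> (sig2 n) q"
proof -
  obtain x yy c1 c2 where q: "q = (x,yy,c1,c2)" by (metis prod.collapse)
  obtain k l where n: "n = (k,l)" by (metis prod.collapse)
  have s1: "sh0 n (Gm q) = (fst (Gm q), fst (snd (Gm q)), of_int k, of_int l)"
    unfolding sh0_def n by simp
  have s2: "sh0 (sig2 n) q = (fst q, fst (snd q), - (of_int k) - (of_int l), of_int k)"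
    unfolding sh0_def sig2_def n q by simp
  have p: "phs n (Gm q) = phs (sig2 n) q + 2 * pi * of_int k"
    unfolding phs_def n sig2_def by (simp add: Gm_simps q algebra_simps)
  have c: "cis (phs n (Gm q)) = cis (phs (sig2 n) q)"
    unfolding p cis_mult[symmetric] by simp
  show ?thesis unfolding T2_def s1 s2 c using Gf_sym[OF y] by simp
qed

lemma F1_sym:
  assumes y: "fst (snd q) \<noteq> 0"
  shows "infsum (\<lambda>n. T1 \<alpha> n (Gm q)) UNIV = infsum (\<lambda>n. T1 \<alpha> n q) UNIV"
  unfolding T1_sym[OF y] by (rule infsum_reindex_bij_betw[OF bij_sig1])

lemma F2_sym:
  assumes y: "fst (snd q) \<noteq> 0"
  shows "infsum (\<lambda>n. T2 \<alpha> n (Gm q)) UNIV = infsum (\<lambda>n. T2 \<alpha> n q) UNIV"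
  unfolding T2_sym[OF y] by (rule infsum_reindex_bij_betw[OF bij_sig2])


definition Lm :: "real \<times> real \<times> real \<times> real \<Rightarrow> real \<times> real \<times> real \<times> real" where
  "Lm h = (- fst h / 2 - sqrt 3 / 2 * fst (snd h), sqrt 3 / 2 * fst h - fst (snd h) / 2,
           snd (snd (snd h)), - fst (snd (snd h)) - snd (snd (snd h)))"

lemma s3sq: "sqrt 3 * sqrt 3 = (3::real)" by simp

lemma Gm_q0: "Gm q0 = q0"
proof -
  have D: "(1/2 - 1)\<^sup>2 + (sqrt 3 / 2)\<^sup>2 = (1::real)" by (simp add: power2_eq_square)
  have s: "(sqrt 3 / 2)\<^sup>2 = (3/4::real)" by (simp add: power_divide)
  show ?thesis unfolding Gm_def q0_def Let_def by (simp add: s) (simp add: power2_eq_square)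
qed

lemma Gm_deriv: "(Gm has_derivative Lm) (at q0)"
proof -
  have D: "(1/2 - 1)\<^sup>2 + (sqrt 3 / 2)\<^sup>2 = (1::real)" by (simp add: power2_eq_square)
  show ?thesis
    unfolding Gm_def[abs_def] Let_def q0_def
    apply (rule has_derivative_eq_rhs)
     apply (rule derivative_eq_intros refl | (simp add: D; fail))+
    apply (rule ext)
    subgoal for h
      apply (cases h)
      apply (simp add: Lm_def D power2_eq_square)
      apply (simp add: field_simps s3sq)
      done
    done
qed

lemma Lm_sum: "h + Lm h + Lm (Lm h) = 0"
proof -
  obtain a b c d where h: "h = (a,b,c,d)" by (metis prod.collapse)
  show ?thesis unfolding h Lm_def
    by (simp add: zero_prod_def field_simps s3sq)
qed

lemma sym_zero:
  fixes F :: "real \<times> real \<times> real \<times> real \<Rightarrow> 'b::real_normed_vector"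
  assumes dF: "(F has_derivative D) (at q0)" and sym: "\<And>q. q \<in> ball q0 (1/10) \<Longrightarrow> F (Gm q) = F q"
  shows "D = (\<lambda>_. 0)"
proof -
  have lin: "linear D" using dF by (rule has_derivative_linear)
  have "((\<lambda>q. F (Gm q)) has_derivative (\<lambda>h. D (Lm h))) (at q0)"
    using has_derivative_compose[OF Gm_deriv, of F D] dF Gm_q0 by simp
  then have "(F has_derivative (\<lambda>h. D (Lm h))) (at q0)"
    by (rule has_derivative_transform_within_open[where s = "ball q0 (1/10)"]) (auto simp: sym)
  then have DL: "(\<lambda>h. D (Lm h)) = D" using dF by (rule has_derivative_unique)
  show ?thesis
  proof
    fix h
    have e1: "D (Lm h) = D h" using DL by metis
    have e2: "D (Lm (Lm h)) = D h" using DL by metis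
    have "D h + D (Lm h) + D (Lm (Lm h)) = D (h + Lm h + Lm (Lm h))"
      by (simp add: linear_add[OF lin])
    also have "\<dots> = 0" unfolding Lm_sum by (simp add: linear_0[OF lin])
    finally have "D h + D h + D h = 0" unfolding e1 e2 .
    moreover have "(1 + 1 + 1 :: real) *\<^sub>R D h = D h + D h + D h" by (simp only: scaleR_add_left scaleR_one)
    ultimately have "(3::real) *\<^sub>R D h = 0" by simp
    then show "D h = 0" by simp
  qed
qed


definition emb :: "real \<times> real \<Rightarrow> real \<times> real \<times> real \<times> real" where
  "emb p = (fst p, snd p, fst (bpt (fst p) (snd p)), snd (bpt (fst p) (snd p)))"

lemma emb_p0: "emb (1/2, sqrt 3 / 2) = q0"
proof -
  have s: "(sqrt 3 / 2)\<^sup>2 = (3/4::real)" by (simp add: power_divide)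
  show ?thesis unfolding emb_def bpt_def q0_def by (simp add: s)
qed

lemma emb_deriv: "\<exists>E. (emb has_derivative E) (at (1/2, sqrt 3 / 2))"
  unfolding emb_def[abs_def] bpt_def
  apply (rule exI)
  apply (rule derivative_eq_intros refl | (simp; fail))+
  done

theorem lemma4p1:
  fixes \<alpha> :: real
  assumes "\<alpha> > 0"
  shows "((\<lambda>p. theta (fst p) (snd p) (bpt (fst p) (snd p)) \<alpha>) has_derivative (\<lambda>_. 0))
           (at (1/2, sqrt 3 / 2)) \<and>
         ((\<lambda>p. theta_hat (fst p) (snd p) (bpt (fst p) (snd p)) \<alpha>) has_derivative (\<lambda>_. 0))
           (at (1/2, sqrt 3 / 2))"
proof -
  obtain E where E: "(emb has_derivative E) (at (1/2, sqrt 3 / 2))" using emb_deriv by blast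
  obtain D1 where D1: "((\<lambda>q. theta (fst q) (fst (snd q)) (snd (snd q)) \<alpha>) has_derivative D1) (at q0)"
    using F_diff(1)[OF assms] by blast
  obtain D2 where D2: "((\<lambda>q. theta_hat (fst q) (fst (snd q)) (snd (snd q)) \<alpha>) has_derivative D2) (at q0)"
    using F_diff(2)[OF assms] by blast
  have z1: "D1 = (\<lambda>_. 0)"
  proof (rule sym_zero[OF D1])
    fix q assume q: "q \<in> ball q0 (1/10)"
    show "theta (fst (Gm q)) (fst (snd (Gm q))) (snd (snd (Gm q))) \<alpha> = theta (fst q) (fst (snd q)) (snd (snd q)) \<alpha>"
      unfolding theta_T1 using F1_sym[OF ball_good(2)[OF q]] .
  qed
  have z2: "D2 = (\<lambda>_. 0)"
  proof (rule sym_zero[OF D2])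
    fix q assume q: "q \<in> ball q0 (1/10)"
    show "theta_hat (fst (Gm q)) (fst (snd (Gm q))) (snd (snd (Gm q))) \<alpha> = theta_hat (fst q) (fst (snd q)) (snd (snd q)) \<alpha>"
      unfolding theta_hat_T2 using F2_sym[OF ball_good(2)[OF q]] .
  qed
  have c1: "((\<lambda>p. theta (fst (emb p)) (fst (snd (emb p))) (snd (snd (emb p))) \<alpha>) has_derivative (\<lambda>h. D1 (E h))) (at (1/2, sqrt 3 / 2))"
    using has_derivative_compose[OF E, of "\<lambda>q. theta (fst q) (fst (snd q)) (snd (snd q)) \<alpha>" D1] D1 emb_p0 by simp
  have c2: "((\<lambda>p. theta_hat (fst (emb p)) (fst (snd (emb p))) (snd (snd (emb p))) \<alpha>) has_derivative (\<lambda>h. D2 (E h))) (at (1/2, sqrt 3 / 2))"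
    using has_derivative_compose[OF E, of "\<lambda>q. theta_hat (fst q) (fst (snd q)) (snd (snd q)) \<alpha>" D2] D2 emb_p0 by simp
  have e: "(fst (bpt a b), snd (bpt a b)) = bpt a b" for a b by simp
  show ?thesis
    using c1 c2 unfolding z1 z2 emb_def by (simp add: e)
qed


end
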